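(* Under Assumption 1, $\lim_{\nu\to\infty}T^\nu=\frac1N\mathbf{1}_N\mathbf{1}_N^\top$, $\lim_{\nu\to\infty}A_\nu=A_\infty$, and $\lim_{\nu\to\infty}F_\nu(x)=F_\infty(x)$ uniformly in $x\in\mathcal{X}$. Moreover the operators $F_\nu$ are bounded on $\mathcal{X}$, uniformly in $\nu$.
   Context: Let $N,n,m$ be positive integers; for $i\in\{1,\dots,N\}$, $\mathcal{X}^i\subset\mathbb{R}^n$ is convex, compact with non-empty interior; $\mathcal{X}=\mathcal{X}^1\times\dots\times\mathcal{X}^N$, $x=[x^1;\dots;x^N]$. Costs $J^i(z_1,z_2):\mathcal{X}^i\times\mathrm{conv}(\mathcal{X}^1,\dots,\mathcal{X}^N)\to\mathbb{R}$ are continuously differentiable in $(z_1,z_2)$, with $x^i\mapsto J^i(x^i,\frac1N\sum_jx^j)$ convex for each fixed $x^{-i}$. $\hat A\in\mathbb{R}^{m\times n}$. $T\in[0,1]^{N\times N}$. Define $\sigma_\infty(x)=\frac1N\sum_jx^j$, $\sigma^i_\nu(x)=\sum_j[T^\nu]_{ij}x^j$, $A_\nu=T^\nu\otimes\hat A$, $A_\infty=\frac1N\mathbf{1}_N\mathbf{1}_N^\top\otimes\hat A$, $F_\infty(x)=[\nabla_{z_1}J^i(x^i,\sigma_\infty(x))+\frac1N\nabla_{z_2}J^i(x^i,\sigma_\infty(x))]_{i=1}^N$, $F_\nu(x)=[\nabla_{z_1}J^i(x^i,\sigma^i_\nu(x))+[T^\nu]_{ii}\nabla_{z_2}J^i(x^i,\sigma^i_\nu(x))]_{i=1}^N$.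 Assumption 1: $T$ is primitive (some power has all entries positive) and doubly stochastic. *)

theory Defs
  imports "HOL-Analysis.Analysis"
begin

primrec matpow :: "real^'n^'n \<Rightarrow> nat \<Rightarrow> real^'n^'n" where
  "matpow A 0 = mat 1"
| "matpow A (Suc k) = A ** matpow A k"

definition kron :: "real^'N^'N \<Rightarrow> real^'n^'m \<Rightarrow> real^('N \<times> 'n)^('N \<times> 'm)" where
  "kron M B = (\<chi> r. \<chi> c. M $ fst r $ fst c * B $ snd r $ snd c)"

definition avg_mat :: "real^'N::finite^'N" where
  "avg_mat = (\<chi> i j. 1 / real CARD('N))"

definition primitive :: "real^'N^'N \<Rightarrow> bool" where
  "primitive T \<longleftrightarrow> (\<exists>k. \<forall>i j. matpow T k $ i $ j > 0)"

definition doubly_stochastic :: "real^'N^'N \<Rightarrow> bool" where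
  "doubly_stochastic T \<longleftrightarrow> (\<forall>i j. T $ i $ j \<ge> 0)
     \<and> (\<forall>i. (\<Sum>j\<in>UNIV. T $ i $ j) = 1) \<and> (\<forall>j. (\<Sum>i\<in>UNIV. T $ i $ j) = 1)"

definition A_nu :: "real^'N^'N \<Rightarrow> real^'n^'m \<Rightarrow> nat \<Rightarrow> real^('N \<times> 'n)^('N \<times> 'm)" where
  "A_nu T Ahat \<nu> = kron (matpow T \<nu>) Ahat"

definition A_inf :: "real^'n^'m \<Rightarrow> real^('N::finite \<times> 'n)^('N \<times> 'm)" where
  "A_inf Ahat = kron (avg_mat :: real^'N^'N) Ahat"

text \<open>Stacked decision vector x = [x^1;...;x^N] is represented as x :: real^'n^'N, with x $ j = x^j.\<close>
definition sigma_inf :: "real^'n^'N::finite \<Rightarrow> real^'n" where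
  "sigma_inf x = (1 / real CARD('N)) *\<^sub>R (\<Sum>j\<in>UNIV. x $ j)"

definition sigma_nu :: "real^'N::finite^'N \<Rightarrow> nat \<Rightarrow> real^'n^'N \<Rightarrow> 'N \<Rightarrow> real^'n" where
  "sigma_nu T \<nu> x i = (\<Sum>j\<in>UNIV. matpow T \<nu> $ i $ j *\<^sub>R x $ j)"

text \<open>g1 i z1 z2 and g2 i z1 z2 are the partial gradients of J^i w.r.t. z1 and z2.\<close>
definition F_inf :: "('N::finite \<Rightarrow> real^'n \<Rightarrow> real^'n \<Rightarrow> real^'n) \<Rightarrow> ('N \<Rightarrow> real^'n \<Rightarrow> real^'n \<Rightarrow> real^'n)
    \<Rightarrow> real^'n^'N \<Rightarrow> real^'n^'N" where
  "F_inf g1 g2 x = (\<chi> i. g1 i (x $ i) (sigma_inf x) + (1 / real CARD('N)) *\<^sub>R g2 i (x $ i) (sigma_inf x))"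

definition F_nu :: "('N::finite \<Rightarrow> real^'n \<Rightarrow> real^'n \<Rightarrow> real^'n) \<Rightarrow> ('N \<Rightarrow> real^'n \<Rightarrow> real^'n \<Rightarrow> real^'n)
    \<Rightarrow> real^'N^'N \<Rightarrow> nat \<Rightarrow> real^'n^'N \<Rightarrow> real^'n^'N" where
  "F_nu g1 g2 T \<nu> x = (\<chi> i. g1 i (x $ i) (sigma_nu T \<nu> x i)
      + (matpow T \<nu> $ i $ i) *\<^sub>R g2 i (x $ i) (sigma_nu T \<nu> x i))"

end

theory Submission
  imports Defs
begin

definition rs :: "real^'N::finite^'N \<Rightarrow> bool" where
  "rs S \<longleftrightarrow> (\<forall>i j. S $ i $ j \<ge> 0) \<and> (\<forall>i. (\<Sum>j\<in>UNIV. S $ i $ j) = 1)"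

definition cs :: "real^'N::finite^'N \<Rightarrow> bool" where
  "cs S \<longleftrightarrow> (\<forall>j. (\<Sum>i\<in>UNIV. S $ i $ j) = 1)"

lemma matpow_add: "matpow A (m + n) = matpow A m ** matpow A n"
  by (induction m) (simp_all add: matrix_mul_assoc)

lemma rs_mult: assumes "rs A" "rs B" shows "rs (A ** B)"
proof -
  have "(\<Sum>j\<in>UNIV. (A ** B) $ i $ j) = 1" for i
  proof -
    have "(\<Sum>j\<in>UNIV. (A ** B) $ i $ j) = (\<Sum>j\<in>UNIV. \<Sum>k\<in>UNIV. A$i$k * B$k$j)"
      by (simp add: matrix_matrix_mult_def)
    also have "\<dots> = (\<Sum>k\<in>UNIV. A$i$k * (\<Sum>j\<in>UNIV. B$k$j))"
      by (subst sum.swap) (simp add: sum_distrib_left)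
    also have "\<dots> = 1" using assms by (simp add: rs_def)
    finally show ?thesis .
  qed
  moreover have "(A ** B) $ i $ j \<ge> 0" for i j
    using assms unfolding rs_def matrix_matrix_mult_def by (auto intro!: sum_nonneg)
  ultimately show ?thesis by (simp add: rs_def)
qed

lemma cs_mult: assumes "cs A" "cs B" shows "cs (A ** B)"
proof -
  have "(\<Sum>i\<in>UNIV. (A ** B) $ i $ j) = 1" for j
  proof -
    have "(\<Sum>i\<in>UNIV. (A ** B) $ i $ j) = (\<Sum>i\<in>UNIV. \<Sum>k\<in>UNIV. A$i$k * B$k$j)"
      by (simp add: matrix_matrix_mult_def)
    also have "\<dots> = (\<Sum>k\<in>UNIV. (\<Sum>i\<in>UNIV. A$i$k) * B$k$j)"
      by (subst sum.swap) (simp add: sum_distrib_right)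
    also have "\<dots> = 1" using assms by (simp add: cs_def)
    finally show ?thesis .
  qed
  then show ?thesis by (simp add: cs_def)
qed

lemma rs_mat1: "rs (mat 1 :: real^'N::finite^'N)"
  by (simp add: rs_def mat_def if_distrib cong: if_cong)

lemma cs_mat1: "cs (mat 1 :: real^'N::finite^'N)"
  by (simp add: cs_def mat_def if_distrib cong: if_cong)

lemma rs_matpow: "rs A \<Longrightarrow> rs (matpow A n)"
  by (induction n) (simp_all add: rs_mat1 rs_mult)

lemma cs_matpow: "cs A \<Longrightarrow> cs (matpow A n)"
  by (induction n) (simp_all add: cs_mat1 cs_mult)

lemma L1:
  fixes S :: "real^'N::finite^'N" and v :: "'N \<Rightarrow> real"
  assumes "rs S"
  shows "(\<Sum>l\<in>UNIV. S$i$l * v l) \<le> Max (range v)"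
    and "(\<Sum>l\<in>UNIV. S$i$l * v l) \<ge> Min (range v)"
proof -
  have "(\<Sum>l\<in>UNIV. S$i$l * v l) \<le> (\<Sum>l\<in>UNIV. S$i$l * Max (range v))"
    using assms unfolding rs_def by (intro sum_mono mult_left_mono) auto
  also have "\<dots> = Max (range v)" using assms by (simp add: rs_def sum_distrib_right[symmetric])
  finally show "(\<Sum>l\<in>UNIV. S$i$l * v l) \<le> Max (range v)" .
  have "(\<Sum>l\<in>UNIV. S$i$l * v l) \<ge> (\<Sum>l\<in>UNIV. S$i$l * Min (range v))"
    using assms unfolding rs_def by (intro sum_mono mult_left_mono) auto
  moreover have "(\<Sum>l\<in>UNIV. S$i$l * Min (range v)) = Min (range v)" using assms by (simp add: rs_def sum_distrib_right[symmetric])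
  ultimately show "(\<Sum>l\<in>UNIV. S$i$l * v l) \<ge> Min (range v)" by simp
qed

lemma L2:
  fixes S :: "real^'N::finite^'N" and v :: "'N \<Rightarrow> real"
  assumes "rs S" and d: "\<And>i l. S$i$l \<ge> \<delta>"
  shows "(\<Sum>l\<in>UNIV. S$i$l * v l) \<le> Max (range v) - \<delta> * (Max (range v) - Min (range v))"
    and "(\<Sum>l\<in>UNIV. S$i$l * v l) \<ge> Min (range v) + \<delta> * (Max (range v) - Min (range v))"
proof -
  let ?M = "Max (range v)" and ?m = "Min (range v)"
  have "?m \<in> range v" by (rule Min_in) auto
  then obtain l0 where l0: "v l0 = ?m" by (metis rangeE)
  have "?M \<in> range v" by (rule Max_in) auto
  then obtain l1 where l1: "v l1 = ?M" by (metis rangeE)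
  have mM: "?m \<le> ?M" by (simp add: Min_le_iff)
  have nn: "S$i$l \<ge> 0" for l using assms(1) by (simp add: rs_def)
  have "S$i$l0 * (?M - v l0) \<le> (\<Sum>l\<in>UNIV. S$i$l * (?M - v l))"
    by (rule member_le_sum[where f="\<lambda>l. S$i$l * (?M - v l)"]) (auto intro!: mult_nonneg_nonneg nn)
  also have "\<dots> = ?M - (\<Sum>l\<in>UNIV. S$i$l * v l)"
    using assms(1) by (simp add: rs_def right_diff_distrib sum_subtractf sum_distrib_right[symmetric])
  finally have a: "S$i$l0 * (?M - ?m) \<le> ?M - (\<Sum>l\<in>UNIV. S$i$l * v l)" using l0 by simp
  have "\<delta> * (?M - ?m) \<le> S$i$l0 * (?M - ?m)" using d mM by (intro mult_right_mono) auto
  with a show "(\<Sum>l\<in>UNIV. S$i$l * v l) \<le> ?M - \<delta> * (?M - ?m)" by linarith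
  have "S$i$l1 * (v l1 - ?m) \<le> (\<Sum>l\<in>UNIV. S$i$l * (v l - ?m))"
    by (rule member_le_sum[where f="\<lambda>l. S$i$l * (v l - ?m)"]) (auto intro!: mult_nonneg_nonneg nn)
  also have "\<dots> = (\<Sum>l\<in>UNIV. S$i$l * v l) - ?m"
    using assms(1) by (simp add: rs_def right_diff_distrib sum_subtractf sum_distrib_right[symmetric])
  finally have a: "S$i$l1 * (?M - ?m) \<le> (\<Sum>l\<in>UNIV. S$i$l * v l) - ?m" using l1 by simp
  have "\<delta> * (?M - ?m) \<le> S$i$l1 * (?M - ?m)" using d mM by (intro mult_right_mono) auto
  with a show "(\<Sum>l\<in>UNIV. S$i$l * v l) \<ge> ?m + \<delta> * (?M - ?m)" by linarith
qed


lemma powdiv_zero: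
  fixes c :: real
  assumes "0 \<le> c" "c < 1" "0 < (K::nat)"
  shows "(\<lambda>n. c ^ (n div K)) \<longlonglongrightarrow> 0"
proof -
  have "(\<lambda>n. c ^ n) \<longlonglongrightarrow> 0" by (rule LIMSEQ_realpow_zero) (use assms in auto)
  then show ?thesis
    using filterlim_compose[of "\<lambda>n. c ^ n" "nhds 0" sequentially "\<lambda>n. n div K"]
      filterlim_at_top_div_const_nat[OF assms(3)] by auto
qed

lemma conv_matpow:
  fixes T :: "real^'N::finite^'N"
  assumes rsT: "rs T" and csT: "cs T" and pT: "primitive T"
  shows "\<exists>E. E \<longlonglongrightarrow> 0 \<and> (\<forall>\<nu> i j. \<bar>matpow T \<nu> $ i $ j - 1 / real CARD('N)\<bar> \<le> E \<nu>)"
proof -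
  obtain k where k: "\<And>i j. matpow T k $ i $ j > 0" using pT unfolding primitive_def by auto
  define K where "K = Suc k"
  define P where "P = matpow T K"
  have P_pos: "P $ i $ j > 0" for i j
  proof -
    have "P $ i $ j = (\<Sum>l\<in>UNIV. T$i$l * (\<lambda>l. matpow T k $ l $ j) l)"
      by (simp add: P_def K_def matrix_matrix_mult_def)
    also have "\<dots> \<ge> Min (range (\<lambda>l. matpow T k $ l $ j))" by (rule L1(2)[OF rsT])
    finally have "P $ i $ j \<ge> Min (range (\<lambda>l. matpow T k $ l $ j))" .
    moreover have "Min (range (\<lambda>l. matpow T k $ l $ j)) \<in> range (\<lambda>l. matpow T k $ l $ j)"
      by (rule Min_in) auto
    ultimately show ?thesis using k by (metis (no_types, lifting) order_less_le_trans rangeE)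
  qed
  define \<delta> where "\<delta> = Min (range (\<lambda>p. P $ fst p $ snd p))"
  have "\<delta> \<in> range (\<lambda>p. P $ fst p $ snd p)" unfolding \<delta>_def by (rule Min_in) auto
  then have dpos: "\<delta> > 0" using P_pos by auto
  have dle: "P $ i $ j \<ge> \<delta>" for i j unfolding \<delta>_def
    by (rule Min_le) (auto intro: range_eqI[where x="(i,j)"])
  have rsP: "rs P" unfolding P_def by (rule rs_matpow[OF rsT])
  define c where "c = max 0 (1 - 2 * \<delta>)"
  have c0: "0 \<le> c" and c1: "c < 1" using dpos by (auto simp: c_def)
  define osc where "osc \<nu> j = Max (range (\<lambda>i. matpow T \<nu> $ i $ j)) - Min (range (\<lambda>i. matpow T \<nu> $ i $ j))" for \<nu> j
  have osc_nn: "osc \<nu> j \<ge> 0" for \<nu> j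
  proof -
    have "Min (range (\<lambda>i. matpow T \<nu> $ i $ j)) \<le> matpow T \<nu> $ i $ j" for i by (rule Min_le) auto
    moreover have "Max (range (\<lambda>i. matpow T \<nu> $ i $ j)) \<ge> matpow T \<nu> $ i $ j" for i by (rule Max_ge) auto
    ultimately show ?thesis unfolding osc_def by (meson diff_ge_0_iff_ge order_trans)
  qed
  have step1: "osc (Suc \<nu>) j \<le> osc \<nu> j" for \<nu> j
  proof -
    have e: "matpow T (Suc \<nu>) $ i $ j = (\<Sum>l\<in>UNIV. T$i$l * (\<lambda>l. matpow T \<nu> $ l $ j) l)" for i
      by (simp add: matrix_matrix_mult_def)
    have "Max (range (\<lambda>i. matpow T (Suc \<nu>) $ i $ j)) \<le> Max (range (\<lambda>i. matpow T \<nu> $ i $ j))"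
      apply (subst Max_le_iff, simp, simp)
      apply (simp only: e)
      using L1(1)[OF rsT, where v="\<lambda>l. matpow T \<nu> $ l $ j"] by auto
    moreover have "Min (range (\<lambda>i. matpow T (Suc \<nu>) $ i $ j)) \<ge> Min (range (\<lambda>i. matpow T \<nu> $ i $ j))"
      apply (subst Min_ge_iff, simp, simp)
      apply (simp only: e)
      using L1(2)[OF rsT, where v="\<lambda>l. matpow T \<nu> $ l $ j"] by auto
    ultimately show ?thesis unfolding osc_def by linarith
  qed
  have stepK: "osc (K + \<nu>) j \<le> c * osc \<nu> j" for \<nu> j
  proof -
    have e: "matpow T (K + \<nu>) $ i $ j = (\<Sum>l\<in>UNIV. P$i$l * (\<lambda>l. matpow T \<nu> $ l $ j) l)" for i
      by (simp add: matpow_add P_def matrix_matrix_mult_def)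
    let ?M = "Max (range (\<lambda>i. matpow T \<nu> $ i $ j))" and ?m = "Min (range (\<lambda>i. matpow T \<nu> $ i $ j))"
    have "Max (range (\<lambda>i. matpow T (K + \<nu>) $ i $ j)) \<le> ?M - \<delta> * (?M - ?m)"
      apply (subst Max_le_iff, simp, simp)
      apply (simp only: e)
      using L2(1)[OF rsP dle, where v="\<lambda>l. matpow T \<nu> $ l $ j"] by auto
    moreover have "Min (range (\<lambda>i. matpow T (K + \<nu>) $ i $ j)) \<ge> ?m + \<delta> * (?M - ?m)"
      apply (subst Min_ge_iff, simp, simp)
      apply (simp only: e)
      using L2(2)[OF rsP dle, where v="\<lambda>l. matpow T \<nu> $ l $ j"] by auto
    ultimately have "osc (K + \<nu>) j \<le> (1 - 2 * \<delta>) * osc \<nu> j" unfolding osc_def by (simp add: algebra_simps)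
    also have "\<dots> \<le> c * osc \<nu> j" using osc_nn[of \<nu> j] by (intro mult_right_mono) (auto simp: c_def)
    finally show ?thesis .
  qed
  have osc0: "osc 0 j \<le> 1" for j
  proof -
    have "Max (range (\<lambda>i. matpow T 0 $ i $ j)) \<le> 1" by (subst Max_le_iff) (auto simp: mat_def)
    moreover have "Min (range (\<lambda>i. matpow T 0 $ i $ j)) \<ge> 0" by (subst Min_ge_iff) (auto simp: mat_def)
    ultimately show ?thesis unfolding osc_def by linarith
  qed
  have oscr: "osc r j \<le> 1" for r j
    by (induction r) (use osc0 step1 order_trans in blast)+
  have oscq: "osc (q * K + r) j \<le> c ^ q" for q r j
  proof (induction q)
    case 0 then show ?case using oscr by simp
  next
    case (Suc q)
    have "osc (Suc q * K + r) j = osc (K + (q * K + r)) j" by (simp add: algebra_simps)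
    also have "\<dots> \<le> c * osc (q * K + r) j" by (rule stepK)
    also have "\<dots> \<le> c * c ^ q" using Suc c0 by (intro mult_left_mono) auto
    finally show ?case by simp
  qed
  have Kpos: "0 < K" by (simp add: K_def)
  define E where "E \<nu> = c ^ (\<nu> div K)" for \<nu>
  have bound: "\<bar>matpow T \<nu> $ i $ j - 1 / real CARD('N)\<bar> \<le> E \<nu>" for \<nu> i j
  proof -
    let ?v = "\<lambda>i. matpow T \<nu> $ i $ j"
    let ?M = "Max (range ?v)" and ?m = "Min (range ?v)"
    have vm: "?m \<le> ?v i" for i by (rule Min_le) auto
    have vM: "?v i \<le> ?M" for i by (rule Max_ge) auto
    have s1: "(\<Sum>i\<in>UNIV. ?v i) = 1" using cs_matpow[OF csT] by (simp add: cs_def)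
    have "(\<Sum>i\<in>(UNIV::'N set). ?m) \<le> (\<Sum>i\<in>UNIV. ?v i)" by (rule sum_mono) (rule vm)
    then have "real CARD('N) * ?m \<le> 1" using s1 by simp
    then have a: "?m \<le> 1 / real CARD('N)" by (simp add: field_simps)
    have "(\<Sum>i\<in>(UNIV::'N set). ?v i) \<le> (\<Sum>i\<in>(UNIV::'N set). ?M)" by (rule sum_mono) (use vM in blast)
    then have "1 \<le> real CARD('N) * ?M" using s1 by simp
    then have b: "1 / real CARD('N) \<le> ?M" by (simp add: field_simps)
    have "\<bar>?v i - 1 / real CARD('N)\<bar> \<le> osc \<nu> j" unfolding osc_def using a b vm[of i] vM[of i] by linarith
    also have "osc \<nu> j \<le> E \<nu>" unfolding E_def using oscq[of "\<nu> div K" "\<nu> mod K" j] by simp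
    finally show ?thesis .
  qed
  have "E \<longlonglongrightarrow> 0" unfolding E_def by (rule powdiv_zero[OF c0 c1 Kpos])
  with bound show ?thesis by blast
qed


lemma norm_vec_le_sum: "norm (x :: 'a::real_normed_vector^'N::finite) \<le> (\<Sum>i\<in>UNIV. norm (x $ i))"
  unfolding norm_vec_def by (rule L2_set_le_sum) auto

lemma bound_fin:
  fixes f :: "'N::finite \<Rightarrow> 'a::metric_space \<Rightarrow> 'b::real_normed_vector"
  assumes "\<And>i. compact (C i)" "\<And>i. continuous_on (C i) (f i)"
  shows "\<exists>B. B \<ge> 0 \<and> (\<forall>i. \<forall>p\<in>C i. norm (f i p) \<le> B)"
proof -
  have "\<forall>i. \<exists>B. \<forall>p\<in>C i. norm (f i p) \<le> B"
  proof
    fix i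
    have "bounded (f i ` C i)" using assms by (intro compact_imp_bounded compact_continuous_image) auto
    then show "\<exists>B. \<forall>p\<in>C i. norm (f i p) \<le> B" unfolding bounded_iff by auto
  qed
  then obtain Bf where Bf: "\<And>i. \<forall>p\<in>C i. norm (f i p) \<le> Bf i" by metis
  define B where "B = max 0 (Max (range Bf))"
  have "Bf i \<le> B" for i unfolding B_def by (metis Max_ge UNIV_I finite finite_imageI image_eqI max.coboundedI2)
  then show ?thesis using Bf by (metis B_def max.cobounded1 order_trans)
qed

lemma unif_fin:
  fixes f :: "'N::finite \<Rightarrow> 'a::metric_space \<Rightarrow> 'b::metric_space"
  assumes "\<And>i. compact (C i)" "\<And>i. continuous_on (C i) (f i)" "e > 0"
  shows "\<exists>d>0. \<forall>i. \<forall>p\<in>C i. \<forall>q\<in>C i. dist q p < d \<longrightarrow> dist (f i q) (f i p) < e"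
proof -
  have "\<forall>i. \<exists>d>0. \<forall>p\<in>C i. \<forall>q\<in>C i. dist q p < d \<longrightarrow> dist (f i q) (f i p) < e"
  proof
    fix i
    have "uniformly_continuous_on (C i) (f i)" using assms by (intro compact_uniformly_continuous) auto
    then show "\<exists>d>0. \<forall>p\<in>C i. \<forall>q\<in>C i. dist q p < d \<longrightarrow> dist (f i q) (f i p) < e"
      unfolding uniformly_continuous_on_def using assms(3) by metis
  qed
  then obtain D where D: "\<And>i. D i > 0" "\<And>i. \<forall>p\<in>C i. \<forall>q\<in>C i. dist q p < D i \<longrightarrow> dist (f i q) (f i p) < e"
    by metis
  define d where "d = Min (range D)"
  have "d \<in> range D" unfolding d_def by (rule Min_in) auto
  then have "d > 0" using D by auto
  moreover have "d \<le> D i" for i unfolding d_def by (rule Min_le) auto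
  ultimately show ?thesis using D by (meson order_less_le_trans)
qed

lemma split3: "(a::'a::real_vector) + t *\<^sub>R b - (c + u *\<^sub>R d) = (a - c) + t *\<^sub>R (b - d) + (t - u) *\<^sub>R d"
  by (simp add: scaleR_diff_left scaleR_diff_right)

lemma tri3: "norm ((a::'a::real_normed_vector) + t *\<^sub>R b + s *\<^sub>R d) \<le> norm a + \<bar>t\<bar> * norm b + \<bar>s\<bar> * norm d"
proof -
  have "norm (a + t *\<^sub>R b + s *\<^sub>R d) \<le> norm (a + t *\<^sub>R b) + norm (s *\<^sub>R d)" by (rule norm_triangle_ineq)
  also have "norm (a + t *\<^sub>R b) \<le> norm a + norm (t *\<^sub>R b)" by (rule norm_triangle_ineq)
  finally show ?thesis by simp
qed

lemma tri2: "norm ((a::'a::real_normed_vector) + t *\<^sub>R b) \<le> norm a + \<bar>t\<bar> * norm b"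
  using norm_triangle_ineq[of a "t *\<^sub>R b"] by simp

theorem lemma1:
  fixes Xs :: "'N::finite \<Rightarrow> (real^'n::finite) set"
    and J :: "'N \<Rightarrow> real^'n \<Rightarrow> real^'n \<Rightarrow> real"
    and g1 g2 :: "'N \<Rightarrow> real^'n \<Rightarrow> real^'n \<Rightarrow> real^'n"
    and Ahat :: "real^'n^'m::finite"
    and T :: "real^'N^'N"
  assumes Xs_convex: "\<And>i. convex (Xs i)"
    and Xs_compact: "\<And>i. compact (Xs i)"
    and Xs_interior: "\<And>i. interior (Xs i) \<noteq> {}"
    and J_deriv: "\<And>i z1 z2. z1 \<in> Xs i \<Longrightarrow> z2 \<in> convex hull (\<Union>j. Xs j) \<Longrightarrow>
        ((\<lambda>(a, b). J i a b) has_derivative (\<lambda>(h1, h2). g1 i z1 z2 \<bullet> h1 + g2 i z1 z2 \<bullet> h2))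
          (at (z1, z2) within Xs i \<times> (convex hull (\<Union>j. Xs j)))"
    and g1_cont: "\<And>i. continuous_on (Xs i \<times> (convex hull (\<Union>j. Xs j))) (\<lambda>(a, b). g1 i a b)"
    and g2_cont: "\<And>i. continuous_on (Xs i \<times> (convex hull (\<Union>j. Xs j))) (\<lambda>(a, b). g2 i a b)"
    and J_convex: "\<And>i x. (\<forall>k. x $ k \<in> Xs k) \<Longrightarrow>
        convex_on (Xs i) (\<lambda>y. J i y (sigma_inf (\<chi> k. if k = i then y else x $ k)))"
    and T_range: "\<And>i j. T $ i $ j \<in> {0..1}"
    and T_primitive: "primitive T"
    and T_ds: "doubly_stochastic T"
  shows "((\<lambda>\<nu>. matpow T \<nu>) \<longlonglongrightarrow> avg_mat)
    \<and> ((\<lambda>\<nu>. A_nu T Ahat \<nu>) \<longlonglongrightarrow> A_inf Ahat)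
    \<and> uniform_limit {x. \<forall>i. x $ i \<in> Xs i} (\<lambda>\<nu> x. F_nu g1 g2 T \<nu> x) (F_inf g1 g2) sequentially
    \<and> (\<exists>B. \<forall>\<nu> x. (\<forall>i. x $ i \<in> Xs i) \<longrightarrow> norm (F_nu g1 g2 T \<nu> x) \<le> B)"
proof -
  let ?N = "real CARD('N)"
  have Npos: "?N > 0" by simp
  have rsT: "rs T" and csT: "cs T" using T_ds by (auto simp: rs_def cs_def doubly_stochastic_def)
  obtain E where E0: "E \<longlonglongrightarrow> 0" and Eb: "\<And>\<nu> i j. \<bar>matpow T \<nu> $ i $ j - 1 / ?N\<bar> \<le> E \<nu>"
    using conv_matpow[OF rsT csT T_primitive] by blast
  have Enn: "E \<nu> \<ge> 0" for \<nu> using Eb[of \<nu>] by (meson abs_ge_zero order_trans)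
  have entry: "(\<lambda>\<nu>. matpow T \<nu> $ i $ j) \<longlonglongrightarrow> 1 / ?N" for i j
  proof (rule LIM_zero_cancel, rule Lim_null_comparison[OF _ E0])
    show "\<forall>\<^sub>F \<nu> in sequentially. norm (matpow T \<nu> $ i $ j - 1 / ?N) \<le> E \<nu>"
      using Eb by simp
  qed
  have c1: "(\<lambda>\<nu>. matpow T \<nu>) \<longlonglongrightarrow> avg_mat"
    by (rule vec_tendstoI, rule vec_tendstoI) (simp add: avg_mat_def entry)
  have c2: "(\<lambda>\<nu>. A_nu T Ahat \<nu>) \<longlonglongrightarrow> A_inf Ahat"
    unfolding A_nu_def A_inf_def kron_def
    by (intro tendsto_vec_lambda tendsto_mult tendsto_const) (simp add: avg_mat_def entry)
  define H where "H = convex hull (\<Union>j. Xs j)"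
  have cH: "compact H" unfolding H_def using Xs_compact by (intro compact_convex_hull compact_UN) auto
  have convH: "convex H" unfolding H_def by simp
  have XsH: "Xs j \<subseteq> H" for j unfolding H_def by (meson UnionI hull_subset rangeI subset_iff)
  have cXH: "compact (Xs i \<times> H)" for i using Xs_compact cH by (intro compact_Times)
  obtain B1 where B1: "B1 \<ge> 0" "\<And>i p. p \<in> Xs i \<times> H \<Longrightarrow> norm ((\<lambda>(a, b). g1 i a b) p) \<le> B1"
    using bound_fin[of "\<lambda>i. Xs i \<times> H" "\<lambda>i. (\<lambda>(a, b). g1 i a b)", OF cXH g1_cont[folded H_def]] by blast
  obtain B2 where B2: "B2 \<ge> 0" "\<And>i p. p \<in> Xs i \<times> H \<Longrightarrow> norm ((\<lambda>(a, b). g2 i a b) p) \<le> B2"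
    using bound_fin[of "\<lambda>i. Xs i \<times> H" "\<lambda>i. (\<lambda>(a, b). g2 i a b)", OF cXH g2_cont[folded H_def]] by blast
  obtain R where R: "R \<ge> 0" "\<And>j y. y \<in> Xs j \<Longrightarrow> norm y \<le> R"
    using bound_fin[of Xs "\<lambda>i y. y", OF Xs_compact continuous_on_id] by blast
  have B1': "norm (g1 i a b) \<le> B1" if "a \<in> Xs i" "b \<in> H" for i a b using B1(2)[of "(a,b)" i] that by auto
  have B2': "norm (g2 i a b) \<le> B2" if "a \<in> Xs i" "b \<in> H" for i a b using B2(2)[of "(a,b)" i] that by auto
  have tle1: "matpow T \<nu> $ i $ j \<le> 1" for \<nu> i j
  proof -
    have r: "rs (matpow T \<nu>)" by (rule rs_matpow[OF rsT])
    have "matpow T \<nu> $ i $ j \<le> (\<Sum>l\<in>UNIV. matpow T \<nu> $ i $ l)"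
      by (rule member_le_sum) (use r in \<open>auto simp: rs_def\<close>)
    then show ?thesis using r by (simp add: rs_def)
  qed
  have tge0: "matpow T \<nu> $ i $ j \<ge> 0" for \<nu> i j using rs_matpow[OF rsT] by (simp add: rs_def)
  have snuH: "sigma_nu T \<nu> x i \<in> H" if "\<forall>k. x $ k \<in> Xs k" for \<nu> x i
    unfolding sigma_nu_def
    by (rule convex_sum[OF _ convH]) (use rs_matpow[OF rsT, of \<nu>] that XsH in \<open>auto simp: rs_def\<close>)
  have sinfH: "sigma_inf x \<in> H" if "\<forall>k. x $ k \<in> Xs k" for x
  proof -
    have "sigma_inf x = (\<Sum>j\<in>UNIV. (1 / ?N) *\<^sub>R x $ j)" by (simp add: sigma_inf_def scaleR_sum_right)
    also have "\<dots> \<in> H" by (rule convex_sum[OF _ convH]) (use that XsH in auto)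
    finally show ?thesis .
  qed
  have sdiff: "norm (sigma_nu T \<nu> x i - sigma_inf x) \<le> ?N * E \<nu> * R" if "\<forall>k. x $ k \<in> Xs k" for \<nu> x i
  proof -
    have "sigma_nu T \<nu> x i - sigma_inf x = (\<Sum>j\<in>UNIV. (matpow T \<nu> $ i $ j - 1 / ?N) *\<^sub>R x $ j)"
      by (simp add: sigma_nu_def sigma_inf_def scaleR_sum_right scaleR_diff_left sum_subtractf)
    also have "norm \<dots> \<le> (\<Sum>j\<in>UNIV. norm ((matpow T \<nu> $ i $ j - 1 / ?N) *\<^sub>R x $ j))" by (rule norm_sum)
    also have "\<dots> \<le> (\<Sum>j\<in>(UNIV::'N set). E \<nu> * R)"
      by (rule sum_mono) (use Eb Enn R that in \<open>auto intro!: mult_mono R(2)\<close>)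
    also have "\<dots> = ?N * E \<nu> * R" by simp
    finally show ?thesis .
  qed
  have c3: "uniform_limit {x. \<forall>i. x $ i \<in> Xs i} (\<lambda>\<nu> x. F_nu g1 g2 T \<nu> x) (F_inf g1 g2) sequentially"
    unfolding uniform_limit_iff
  proof (intro allI impI)
    fix e :: real assume e: "e > 0"
    define e' where "e' = e / (3 * ?N)"
    have e': "e' > 0" using e by (simp add: e'_def)
    obtain d1 where d1: "d1 > 0" "\<And>i p q. p \<in> Xs i \<times> H \<Longrightarrow> q \<in> Xs i \<times> H \<Longrightarrow> dist q p < d1
        \<Longrightarrow> dist ((\<lambda>(a, b). g1 i a b) q) ((\<lambda>(a, b). g1 i a b) p) < e'"
      using unif_fin[of "\<lambda>i. Xs i \<times> H" "\<lambda>i. (\<lambda>(a, b). g1 i a b)", OF cXH g1_cont[folded H_def] e'] by blast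
    obtain d2 where d2: "d2 > 0" "\<And>i p q. p \<in> Xs i \<times> H \<Longrightarrow> q \<in> Xs i \<times> H \<Longrightarrow> dist q p < d2
        \<Longrightarrow> dist ((\<lambda>(a, b). g2 i a b) q) ((\<lambda>(a, b). g2 i a b) p) < e'"
      using unif_fin[of "\<lambda>i. Xs i \<times> H" "\<lambda>i. (\<lambda>(a, b). g2 i a b)", OF cXH g2_cont[folded H_def] e'] by blast
    define \<eta> where "\<eta> = min (min d1 d2 / (?N * (R + 1))) (e' / (B2 + 1))"
    have \<eta>: "\<eta> > 0" using d1 d2 e' R B2 by (simp add: \<eta>_def)
    have ev: "\<forall>\<^sub>F \<nu> in sequentially. E \<nu> < \<eta>"
      using E0 \<eta> by (metis order_tendstoD(2))
    show "\<forall>\<^sub>F \<nu> in sequentially. \<forall>x\<in>{x. \<forall>i. x $ i \<in> Xs i}. dist (F_nu g1 g2 T \<nu> x) (F_inf g1 g2 x) < e"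
    proof (rule eventually_mono[OF ev], intro ballI)
      fix \<nu> x assume E\<nu>: "E \<nu> < \<eta>" and x: "x \<in> {x. \<forall>i. x $ i \<in> Xs i}"
      then have xX: "\<forall>k. x $ k \<in> Xs k" by simp
      have comp: "norm (F_nu g1 g2 T \<nu> x $ i - F_inf g1 g2 x $ i) < 3 * e'" for i
      proof -
        let ?a = "x $ i" and ?s = "sigma_nu T \<nu> x i" and ?z = "sigma_inf x" and ?t = "matpow T \<nu> $ i $ i"
        have sd: "norm (?s - ?z) < min d1 d2"
        proof -
          have "norm (?s - ?z) \<le> ?N * E \<nu> * R" by (rule sdiff[OF xX])
          also have "\<dots> \<le> ?N * E \<nu> * (R + 1)" using Enn[of \<nu>] by (intro mult_left_mono) auto
          also have "\<dots> < ?N * \<eta> * (R + 1)" using E\<nu> R by (intro mult_strict_right_mono) auto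
          also have "\<dots> \<le> min d1 d2"
          proof -
            have "\<eta> \<le> min d1 d2 / (?N * (R + 1))" by (simp add: \<eta>_def)
            moreover have "?N * (R + 1) > 0" using R by simp
            ultimately have "\<eta> * (?N * (R + 1)) \<le> min d1 d2" using pos_le_divide_eq by blast
            then show ?thesis by (simp only: mult.assoc mult.commute mult.left_commute)
          qed
          finally show ?thesis .
        qed
        have dd: "dist (?a, ?s) (?a, ?z) = norm (?s - ?z)" by (simp add: dist_Pair_Pair dist_norm)
        have p1: "(?a, ?s) \<in> Xs i \<times> H" and p0: "(?a, ?z) \<in> Xs i \<times> H" using xX snuH[OF xX] sinfH[OF xX] by auto
        have g1d: "norm (g1 i ?a ?s - g1 i ?a ?z) < e'"
          using d1(2)[OF p0 p1] sd dd by (simp add: dist_norm)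
        have g2d: "norm (g2 i ?a ?s - g2 i ?a ?z) < e'"
          using d2(2)[OF p0 p1] sd dd by (simp add: dist_norm)
        have g2b: "norm (g2 i ?a ?z) \<le> B2" using B2' xX sinfH[OF xX] by blast
        define X where "X = (g1 i ?a ?s - g1 i ?a ?z) + ?t *\<^sub>R (g2 i ?a ?s - g2 i ?a ?z) + (?t - 1 / ?N) *\<^sub>R g2 i ?a ?z"
        define Y where "Y = norm (g1 i ?a ?s - g1 i ?a ?z) + \<bar>?t\<bar> * norm (g2 i ?a ?s - g2 i ?a ?z)
            + \<bar>?t - 1 / ?N\<bar> * norm (g2 i ?a ?z)"
        have eq: "F_nu g1 g2 T \<nu> x $ i - F_inf g1 g2 x $ i = X"
          unfolding F_nu_def F_inf_def vec_lambda_beta X_def by (rule split3)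
        have XY: "norm X \<le> Y" unfolding X_def Y_def by (rule tri3)
        have "Y < e' + e' + e'"
        proof -
          have "\<bar>?t\<bar> * norm (g2 i ?a ?s - g2 i ?a ?z) \<le> 1 * e'"
            using tle1 tge0 g2d by (intro mult_mono) auto
          moreover have "\<bar>?t - 1 / ?N\<bar> * norm (g2 i ?a ?z) \<le> \<eta> * B2"
            using Eb[of \<nu> i i] E\<nu> g2b by (intro mult_mono) auto
          moreover have "\<eta> * B2 \<le> e'"
          proof -
            have "\<eta> \<le> e' / (B2 + 1)" by (simp add: \<eta>_def)
            moreover have "B2 + 1 > 0" using B2 by simp
            ultimately have "\<eta> * (B2 + 1) \<le> e'" using pos_le_divide_eq by blast
            then have "\<eta> * B2 + \<eta> \<le> e'" by (simp add: distrib_left)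
            then show ?thesis using \<eta> by linarith
          qed
          ultimately show ?thesis using g1d unfolding Y_def by linarith
        qed
        then show ?thesis unfolding eq using XY by linarith
      qed
      have "dist (F_nu g1 g2 T \<nu> x) (F_inf g1 g2 x) = norm (F_nu g1 g2 T \<nu> x - F_inf g1 g2 x)" by (simp add: dist_norm)
      also have "\<dots> \<le> (\<Sum>i\<in>UNIV. norm ((F_nu g1 g2 T \<nu> x - F_inf g1 g2 x) $ i))" by (rule norm_vec_le_sum)
      also have "\<dots> < (\<Sum>i\<in>(UNIV::'N set). 3 * e')"
        by (rule sum_strict_mono) (use comp in auto)
      also have "\<dots> = e" using Npos by (simp add: e'_def)
      finally show "dist (F_nu g1 g2 T \<nu> x) (F_inf g1 g2 x) < e" .
    qed
  qed
  have c4: "\<exists>B. \<forall>\<nu> x. (\<forall>i. x $ i \<in> Xs i) \<longrightarrow> norm (F_nu g1 g2 T \<nu> x) \<le> B"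
  proof (intro exI allI impI)
    fix \<nu> x assume xX: "\<forall>i. x $ i \<in> Xs i"
    have "norm (F_nu g1 g2 T \<nu> x $ i) \<le> B1 + B2" for i
    proof -
      have "norm (F_nu g1 g2 T \<nu> x $ i) \<le> norm (g1 i (x $ i) (sigma_nu T \<nu> x i))
          + \<bar>matpow T \<nu> $ i $ i\<bar> * norm (g2 i (x $ i) (sigma_nu T \<nu> x i))"
        unfolding F_nu_def vec_lambda_beta by (rule tri2)
      also have "\<dots> \<le> B1 + 1 * B2"
        using B1' B2' xX snuH[OF xX] tle1 tge0 B2 by (intro add_mono mult_mono) auto
      finally show ?thesis by simp
    qed
    then have "norm (F_nu g1 g2 T \<nu> x) \<le> (\<Sum>i\<in>(UNIV::'N set). B1 + B2)"
      using norm_vec_le_sum[of "F_nu g1 g2 T \<nu> x"] sum_mono[of "UNIV::'N set" "\<lambda>i. norm (F_nu g1 g2 T \<nu> x $ i)" "\<lambda>i. B1 + B2"]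
      by (meson order_trans)
    then show "norm (F_nu g1 g2 T \<nu> x) \<le> ?N * (B1 + B2)" by simp
  qed
  show ?thesis using c1 c2 c3 c4 by blast
qed

end
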